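(* For all integers $n\ge0$ and $p\ge1$, $$\mathcal{B}_{n,p}=p!\int_0^1dx_p\int_0^{x_p}dx_{p-1}\cdots\int_0^{x_2}\phi_n(x_1)\,dx_1,$$ i.e. $\mathcal{B}_{n,p}$ equals $p!$ times the $p$-fold iterated integral from $0$ of $\phi_n$, evaluated at $x=1$.
   Context: $S(n,k)$ denotes the Stirling numbers of the second kind and $\phi_n(x)=\sum_{k=0}^nS(n,k)x^k$ are the single-variable Bell (exponential) polynomials. For an integer $p\ge0$, the $p$-Bell numbers $\mathcal{B}_{n,p}$ are defined by $\sum_{n\ge0}\mathcal{B}_{n,p}\frac{z^n}{n!}=\sum_{n\ge0}\binom{n+p}{p}^{-1}\frac{(e^z-1)^n}{n!}$. *)

theory Defs
  imports "HOL-Analysis.Analysis" "HOL-Combinatorics.Stirling"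
    "HOL-Computational_Algebra.Formal_Power_Series"
begin

definition bell_poly :: "nat \<Rightarrow> real \<Rightarrow> real" where
  "bell_poly n x = (\<Sum>k\<le>n. real (Stirling n k) * x ^ k)"

definition pBell_egf :: "nat \<Rightarrow> real fps" where
  "pBell_egf p = (\<Sum>k. fps_const (1 / real ((k + p) choose p)) * (fps_exp 1 - 1) ^ k
                       / fps_const (fact k))"

definition pBell :: "nat \<Rightarrow> nat \<Rightarrow> real" where
  "pBell n p = fact n * fps_nth (pBell_egf p) n"

fun iter_int :: "nat \<Rightarrow> (real \<Rightarrow> real) \<Rightarrow> real \<Rightarrow> real" where
  "iter_int 0 f = f"
| "iter_int (Suc p) f = (\<lambda>x. integral {0..x} (iter_int p f))"

end

theory Submission
  imports Defs
begin

lemma deriv_rec: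
  fixes k :: nat
  defines "A \<equiv> (fps_exp (1::real) - 1)"
  shows "fps_deriv (A ^ Suc k) = of_nat (Suc k) * (A ^ Suc k + A ^ k)"
proof -
  have "fps_deriv (A ^ Suc k) = of_nat (Suc k) * fps_deriv A * A ^ k"
    by (subst fps_deriv_power') simp
  also have "fps_deriv A = A + 1" by (simp add: A_def)
  finally show ?thesis by (simp add: algebra_simps)
qed

lemma expm1_pow_nth:
  "fps_nth ((fps_exp (1::real) - 1) ^ k) n = fact k * real (Stirling n k) / fact n"
proof (induction n k rule: Stirling.induct)
  case 1
  then show ?case by simp
next
  case (2 k)
  then show ?case by simp
next
  case (3 n)
  then show ?case by simp
next
  case (4 n k)
  define A where "A = (fps_exp (1::real) - 1)"
  have "fps_nth (fps_deriv (A ^ Suc k)) n = of_nat (Suc k) * (fps_nth (A ^ Suc k) (n) + fps_nth (A ^ k) (n))"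
  proof -
    have "fps_deriv (A ^ Suc k) = fps_const (real (Suc k)) * (A ^ Suc k + A ^ k)"
      using deriv_rec[of k, folded A_def] fps_of_nat[of "Suc k", where ?'a=real] by simp
    thus ?thesis by simp
  qed
  moreover have "fps_nth (fps_deriv (A ^ Suc k)) n = real (Suc n) * fps_nth (A ^ Suc k) (Suc n)"
    by (subst fps_deriv_nth) simp
  ultimately have "real (Suc n) * fps_nth (A ^ Suc k) (Suc n) = real (Suc k) * (fps_nth (A ^ Suc k) (n) + fps_nth (A ^ k) (n))"
    by simp
  hence "fps_nth (A ^ Suc k) (Suc n) = real (Suc k) * (fps_nth (A ^ Suc k) (n) + fps_nth (A ^ k) (n)) / real (Suc n)"
    by (simp add: field_simps)
  also have "\<dots> = fact (Suc k) * real (Stirling (Suc n) (Suc k)) / fact (Suc n)"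
  proof -
    have i1: "fps_nth (A ^ Suc k) n = fact (Suc k) * real (Stirling n (Suc k)) / fact n"
      using 4(1) unfolding A_def .
    have i2: "fps_nth (A ^ k) n = fact k * real (Stirling n k) / fact n"
      using 4(2) unfolding A_def .
    have fk: "(fact (Suc k)::real) = real (Suc k) * fact k" by simp
    have fn: "(fact (Suc n)::real) = real (Suc n) * fact n" by simp
    have "real (Stirling (Suc n) (Suc k)) = real (Suc k) * real (Stirling n (Suc k)) + real (Stirling n k)"
      by (simp add: algebra_simps)
    then show ?thesis unfolding i1 i2 fk fn
      by (simp add: field_simps)
  qed
  finally show ?case by (simp add: A_def)
qed

lemma pBell_eq: "pBell n p = (\<Sum>k\<le>n. real (Stirling n k) / real ((k + p) choose p))"
proof -
  define g where "g k = fps_const (1 / real ((k + p) choose p)) * (fps_exp 1 - 1) ^ k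
                       / fps_const (fact k :: real)" for k
  have gn: "fps_nth (g k) m = real (Stirling m k) / (real ((k + p) choose p) * fact m)" for k m
    unfolding g_def by (simp add: expm1_pow_nth field_simps)
  define G where "G = Abs_fps (\<lambda>m. \<Sum>k\<le>m. fps_nth (g k) m)"
  have "g sums G"
    unfolding sums_def
  proof (rule tendsto_fpsI)
    fix m
    show "\<forall>\<^sub>F N in sequentially. fps_nth (sum g {..<N}) m = fps_nth G m"
      using eventually_ge_at_top[of "Suc m"]
    proof eventually_elim
      case (elim N)
      have "fps_nth (sum g {..<N}) m = (\<Sum>k<N. fps_nth (g k) m)" by (simp add: fps_sum_nth)
      also have "\<dots> = (\<Sum>k\<le>m. fps_nth (g k) m)"
        by (rule sum.mono_neutral_right) (use elim in \<open>auto simp: gn\<close>)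
      finally show ?case by (simp add: G_def)
    qed
  qed
  hence "pBell_egf p = G" unfolding pBell_egf_def g_def[symmetric] by (rule sums_unique[symmetric])
  hence "pBell n p = fact n * (\<Sum>k\<le>n. fps_nth (g k) n)" by (simp add: pBell_def G_def)
  also have "\<dots> = (\<Sum>k\<le>n. real (Stirling n k) / real ((k + p) choose p))"
    by (simp add: gn sum_distrib_left)
  finally show ?thesis .
qed

lemma iter_poly:
  "x \<ge> 0 \<Longrightarrow> iter_int p (bell_poly n) x =
     (\<Sum>k\<le>n. real (Stirling n k) * fact k / fact (k + p) * x ^ (k + p))"
proof (induction p arbitrary: x)
  case 0
  then show ?case by (simp add: bell_poly_def)
next
  case (Suc p)
  define c where "c k = real (Stirling n k) * fact k / fact (k + p)" for k
  define F where "F t = (\<Sum>k\<le>n. c k / real (k + p + 1) * t ^ (k + p + 1))" for t :: real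
  have "((\<lambda>t. \<Sum>k\<le>n. c k * t ^ (k + p)) has_integral (F x - F 0)) {0..x}"
  proof (rule fundamental_theorem_of_calculus)
    show "0 \<le> x" by fact
    fix t assume "t \<in> {0..x}"
    have "(F has_real_derivative (\<Sum>k\<le>n. c k * t ^ (k + p))) (at t)"
      unfolding F_def
      by (rule derivative_eq_intros refl | simp add: mult.commute)+
    then show "(F has_vector_derivative (\<Sum>k\<le>n. c k * t ^ (k + p))) (at t within {0..x})"
      using has_real_derivative_iff_has_vector_derivative has_vector_derivative_at_within by blast
  qed
  moreover have "F 0 = 0" by (simp add: F_def)
  ultimately have I: "((\<lambda>t. \<Sum>k\<le>n. c k * t ^ (k + p)) has_integral F x) {0..x}" by simp
  have "iter_int (Suc p) (bell_poly n) x = integral {0..x} (\<lambda>t. \<Sum>k\<le>n. c k * t ^ (k + p))"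
    unfolding iter_int.simps by (rule integral_cong) (auto simp: Suc.IH c_def)
  also have "\<dots> = F x" using I by (rule integral_unique)
  also have "\<dots> = (\<Sum>k\<le>n. real (Stirling n k) * fact k / fact (k + Suc p) * x ^ (k + Suc p))"
    unfolding F_def c_def by (rule sum.cong) (simp_all add: field_simps)
  finally show ?case .
qed

theorem mainTheorem10:
  fixes n p :: nat
  assumes "p \<ge> 1"
  shows "pBell n p = fact p * iter_int p (bell_poly n) 1"
proof -
  have "real ((k + p) choose p) = fact (k + p) / (fact p * fact k)" for k
    using binomial_fact[of p "k + p", where ?'a = real] by simp
  hence "pBell n p = (\<Sum>k\<le>n. fact p * (real (Stirling n k) * fact k / fact (k + p)))"
    unfolding pBell_eq by (intro sum.cong) (simp_all add: field_simps)
  also have "\<dots> = fact p * iter_int p (bell_poly n) 1"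
    by (simp add: iter_poly sum_distrib_left)
  finally show ?thesis .
qed

end
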